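(* Let $G$ be a finite subgroup of the unit circle $S^1=\{z\in\mathbb{C}: |z|=1\}$ (under multiplication). (1) Let $\lambda\in G$. Then there do not exist sets $A,B\subseteq\mathbb{C}^*$ with $|A|\ge 2$ and $|B|\ge 2$ such that $AB=(G-\lambda)\setminus\{0\}$. (2) If $|G|\ge 3$, then for every $\xi,\mu\in\mathbb{C}^*$ and every $A\subseteq\mathbb{C}^*$, we have $A/A\neq(\xi G+\mu)\setminus\{0\}$. (3) If $|G|\ge 3$, then for every $\xi,\mu\in\mathbb{C}^*$ and every $A\subseteq\mathbb{C}^*$, we have $A/A\neq\big((\xi G\cup\{0\})+\mu\big)\setminus\{0\}$.
   Context: $\mathbb{C}^*=\mathbb{C}\setminus\{0\}$. For sets $A,B\subseteq\mathbb{C}^*$: $AB=\{ab: a\in A, b\in B\}$ and $A/A=\{a/b: a,b\in A\}$. For $S\subseteq\mathbb{C}$: $\xi S=\{\xi s: s\in S\}$, $S+\mu=\{s+\mu:s\in S\}$, $S-\lambda=\{s-\lambda: s\in S\}$. *)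

theory Defs
  imports "HOL-Analysis.Analysis"
begin

definition set_prod :: "complex set \<Rightarrow> complex set \<Rightarrow> complex set" where
  "set_prod A B = {a * b | a b. a \<in> A \<and> b \<in> B}"

definition set_quot :: "complex set \<Rightarrow> complex set" where
  "set_quot A = {a / b | a b. a \<in> A \<and> b \<in> A}"

definition finite_circle_subgroup :: "complex set \<Rightarrow> bool" where
  "finite_circle_subgroup G \<longleftrightarrow> finite G \<and> G \<noteq> {} \<and> (\<forall>z\<in>G. norm z = 1)
     \<and> (\<forall>x\<in>G. \<forall>y\<in>G. x * y \<in> G) \<and> (\<forall>x\<in>G. inverse x \<in> G)"

definition at_least_two :: "'a set \<Rightarrow> bool" where
  "at_least_two A \<longleftrightarrow> (\<exists>x\<in>A. \<exists>y\<in>A. x \<noteq> y)"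

end

theory Submission
  imports Defs
begin


lemma circle01:
  fixes p q w :: complex
  assumes "cmod p = R1" "cmod q = R1" "cmod w = R1"
    "cmod (p - 1) = R2" "cmod (q - 1) = R2" "cmod (w - 1) = R2"
  shows "p = q \<or> p = w \<or> q = w"
proof -
  have e: "Re z = (R1^2 - R2^2 + 1)/2 \<and> (Im z)^2 = R1^2 - ((R1^2 - R2^2 + 1)/2)^2"
    if "cmod z = R1" "cmod (z - 1) = R2" for z
  proof -
    have a: "R1^2 = (Re z)^2 + (Im z)^2" using that cmod_power2[of z] by simp
    have b: "R2^2 = (Re z - 1)^2 + (Im z)^2" using that cmod_power2[of "z-1"] by simp
    have re: "Re z = (R1^2 - R2^2 + 1)/2" using a b by (simp add: power2_eq_square algebra_simps)
    have im: "(Im z)^2 = R1^2 - (Re z)^2" using a by simp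
    show ?thesis unfolding im re by simp
  qed
  have r: "Re p = Re q" "Re p = Re w" using e assms by metis+
  have i: "(Im p)^2 = (Im q)^2" "(Im p)^2 = (Im w)^2" using e assms by metis+
  have "Im p = Im q \<or> Im p = - Im q" using i(1) by (metis power2_eq_iff)
  moreover have "Im p = Im w \<or> Im p = - Im w" using i(2) by (metis power2_eq_iff)
  ultimately have "Im p = Im q \<or> Im p = Im w \<or> Im q = Im w" by auto
  then show ?thesis using r by (auto simp: complex_eq_iff)
qed

lemma circle3:
  fixes x y z c1 c2 :: complex
  assumes "c1 \<noteq> c2" "cmod (x - c1) = r1" "cmod (y - c1) = r1" "cmod (z - c1) = r1"
    "cmod (x - c2) = r2" "cmod (y - c2) = r2" "cmod (z - c2) = r2"
  shows "x = y \<or> x = z \<or> y = z"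
proof -
  define d where "d = c2 - c1"
  have d: "d \<noteq> 0" using assms(1) by (simp add: d_def)
  define f where "f t = (t - c1) / d" for t
  have n1: "cmod (f t) = r1 / cmod d" if "cmod (t - c1) = r1" for t
    using that by (simp add: f_def norm_divide)
  have n2: "cmod (f t - 1) = r2 / cmod d" if "cmod (t - c2) = r2" for t
  proof -
    have "f t - 1 = (t - c2) / d" using d by (simp add: f_def d_def field_simps)
    then show ?thesis using that by (simp add: norm_divide)
  qed
  have "f x = f y \<or> f x = f z \<or> f y = f z"
    by (rule circle01[of _ "r1 / cmod d" _ _ "r2 / cmod d"]) (use assms n1 n2 in auto)
  then show ?thesis using d by (auto simp: f_def)
qed

lemma re_half:
  fixes z :: complex
  assumes "cmod z = 1" "z \<noteq> 1"
  shows "Re (1 / (z - 1)) = -1/2"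
proof -
  have a: "(Re z)^2 + (Im z)^2 = 1" using assms(1) cmod_power2[of z] by simp
  have ne: "(Re z - 1)^2 + (Im z)^2 \<noteq> 0" using assms(2)
    by (metis complex_eq_iff one_complex.simps(1,2) power_zero_numeral right_minus_eq sum_power2_eq_zero_iff)
  have "Re (1 / (z - 1)) = (Re z - 1) / ((Re z - 1)^2 + (Im z)^2)"
    by (simp add: Re_divide power2_eq_square)
  also have "(Re z - 1)^2 + (Im z)^2 = 2 - 2 * Re z" using a by (simp add: power2_eq_square algebra_simps)
  finally have h: "Re (1 / (z - 1)) = (Re z - 1) / (2 - 2 * Re z)" .
  have "2 - 2 * Re z \<noteq> 0" using ne a by (simp add: power2_eq_square algebra_simps)
  then show ?thesis unfolding h by (simp add: field_simps)
qed

lemma core4: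
  fixes p q r s :: complex
  assumes "Re p = -1/2" "Re q = -1/2" "Re r = -1/2" "Re s = -1/2" "p * s = q * r"
  shows "p = q \<or> p = r"
proof -
  have "Re (p * s) = Re (q * r)" "Im (p * s) = Im (q * r)" using assms(5) by auto
  then have h1: "Im p * Im s = Im q * Im r" and h2: "Im p + Im s = Im q + Im r"
    using assms(1-4) by (auto simp: algebra_simps)
  have "(Im p - Im q) * (Im p - Im r) = 0"
  proof -
    have "Im s = Im q + Im r - Im p" using h2 by simp
    then have "Im p * (Im q + Im r - Im p) = Im q * Im r" using h1 by simp
    then show ?thesis by (simp add: algebra_simps)
  qed
  then show ?thesis using assms by (auto simp: complex_eq_iff)
qed



lemma fcs_facts:
  assumes "finite_circle_subgroup G"
  shows "finite G" "\<And>z. z \<in> G \<Longrightarrow> cmod z = 1" "\<And>x y. x \<in> G \<Longrightarrow> y \<in> G \<Longrightarrow> x * y \<in> G"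
    "\<And>x. x \<in> G \<Longrightarrow> inverse x \<in> G" "1 \<in> G" "0 \<notin> G"
proof -
  show "finite G" "\<And>z. z \<in> G \<Longrightarrow> cmod z = 1" "\<And>x y. x \<in> G \<Longrightarrow> y \<in> G \<Longrightarrow> x * y \<in> G"
    "\<And>x. x \<in> G \<Longrightarrow> inverse x \<in> G" using assms by (auto simp: finite_circle_subgroup_def)
  obtain g where g: "g \<in> G" using assms by (auto simp: finite_circle_subgroup_def)
  then have "g \<noteq> 0" using assms by (auto simp: finite_circle_subgroup_def)
  then show "1 \<in> G" using g assms unfolding finite_circle_subgroup_def
    by (metis right_inverse)
  show "0 \<notin> G" using assms by (force simp: finite_circle_subgroup_def)
qed

lemma part1:
  assumes fcs: "finite_circle_subgroup G" and l: "l \<in> G"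
    and A: "A \<subseteq> - {0}" and B: "B \<subseteq> - {0}" and "at_least_two A" "at_least_two B"
    and eq: "set_prod A B = (\<lambda>g. g - l) ` G - {0}"
  shows False
proof -
  obtain a1 a2 where a: "a1 \<in> A" "a2 \<in> A" "a1 \<noteq> a2" using assms(5) by (auto simp: at_least_two_def)
  obtain b1 b2 where b: "b1 \<in> B" "b2 \<in> B" "b1 \<noteq> b2" using assms(6) by (auto simp: at_least_two_def)
  have nz: "a1 \<noteq> 0" "a2 \<noteq> 0" "b1 \<noteq> 0" "b2 \<noteq> 0" using a b A B by auto
  have ln: "cmod l = 1" using fcs_facts(2)[OF fcs l] .
  then have l0: "l \<noteq> 0" by auto
  have key: "Re (l / (x * y)) = -1/2" if "x \<in> A" "y \<in> B" for x y
  proof -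
    have "x * y \<in> set_prod A B" using that by (auto simp: set_prod_def)
    then have "x * y \<in> (\<lambda>g. g - l) ` G - {0}" unfolding eq .
    then obtain g where g: "g \<in> G" "x * y = g - l" "x * y \<noteq> 0" by blast
    have "cmod (g / l) = 1" using fcs_facts(2)[OF fcs g(1)] ln by (simp add: norm_divide)
    moreover have "g / l \<noteq> 1" using g(2,3) l0 by auto
    ultimately have "Re (1 / (g / l - 1)) = -1/2" by (rule re_half)
    moreover have "1 / (g / l - 1) = l / (x * y)" using g(2,3) l0 by (simp add: field_simps)
    ultimately show ?thesis by simp
  qed
  have "l / (a1 * b1) = l / (a1 * b2) \<or> l / (a1 * b1) = l / (a2 * b1)"
  proof (rule core4[where s = "l / (a2 * b2)"])
    show "l / (a1 * b1) * (l / (a2 * b2)) = l / (a1 * b2) * (l / (a2 * b1))"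
      using nz by (simp add: field_simps)
  qed (use key a b in auto)
  then show False using nz l0 a b by (auto simp: field_simps)
qed



lemma fin_main:
  fixes v \<mu> :: complex and m :: nat
  assumes v0: "v \<noteq> 0" and s1: "(\<Sum>u\<in>{1,v,1/v}. u) = of_nat m * \<mu>"
    and s2: "(\<Sum>u\<in>{1,v,1/v}. u^2) = of_nat m * \<mu>^2" and mu0: "\<mu> \<noteq> 0" and m3: "m \<ge> 3"
    and alt: "(\<mu> \<in> {1,v,1/v} \<and> m \<ge> 4) \<or> m = 3 \<or> (m \<ge> 4 \<and> (\<Sum>u\<in>{1,v,1/v}. u^3) = of_nat m * \<mu>^3)"
  shows False
proof -
  define M where "M = (of_nat m :: complex)"
  have M0: "M \<noteq> 0" "M \<noteq> 1" using m3 by (auto simp: M_def)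
  show False
  proof (cases "v = 1")
    case True
    then have "1 = M * \<mu>" "1 = M * \<mu>^2" using s1 s2 by (auto simp: M_def)
    then have "\<mu> = 1" by (metis mult.left_commute mult_cancel_left1 power2_eq_square)
    then show False using \<open>1 = M * \<mu>\<close> M0 by simp
  next
    case v1: False
    show False
    proof (cases "v = -1")
      case True
      then have "0 = M * \<mu>" using s1 by (auto simp: M_def)
      then show False using M0 mu0 by simp
    next
      case vm1: False
      have d1: "1 / v \<noteq> 1" using v1 by (auto simp: field_simps)
      have d2: "1 / v \<noteq> v" using v1 vm1 v0
        by (metis (no_types, lifting) divide_self_if eq_divide_eq mult_cancel_right1 square_eq_1_iff)
      define s where "s = v + 1/v"
      have e1: "1 + s = M * \<mu>" using s1 d1 d2 v1 by (simp add: M_def s_def add.assoc)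
      have e2: "s^2 - 1 = M * \<mu>^2"
      proof -
        have "(\<Sum>u\<in>{1,v,1/v}. u^2) = 1 + v^2 + (1/v)^2" using d1 d2 v1 by (simp add: add.assoc)
        also have "\<dots> = s^2 - 1" using v0 by (simp add: s_def field_simps power2_eq_square)
        finally show ?thesis using s2 by (simp add: M_def)
      qed
      have "(1 + s)^2 = M * (s^2 - 1)" using e1 e2 by (simp add: power_mult_distrib power2_eq_square)
      then have "(s + 1) * ((M - 1) * s - (M + 1)) = 0" by (simp add: algebra_simps power2_eq_square)
      moreover have "s + 1 \<noteq> 0" using e1 M0 mu0 by (auto simp: add.commute)
      ultimately have hs: "(M - 1) * s = M + 1" by simp
      from alt show False
      proof (elim disjE conjE)
        assume m4: "m \<ge> 4" and mu: "\<mu> \<in> {1,v,1/v}"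
        have "M \<noteq> 3" proof
          assume "M = 3" then have "of_nat m = (of_nat 3 :: complex)" by (simp add: M_def)
          then have "m = 3" using of_nat_eq_iff by blast
          then show False using m4 by simp
        qed
        from mu consider "\<mu> = 1" | "s = \<mu> + 1/\<mu>" unfolding s_def by auto
        then show False
        proof cases
          case 1
          then have "(M - 1) * (M - 1) = M + 1" using e1 hs by (metis add_diff_cancel_left' mult.right_neutral)
          then have "M * (M - 3) = 0" by (simp add: algebra_simps)
          then show False using M0 \<open>M \<noteq> 3\<close> by simp
        next
          case 2
          have a: "(M - 1) * \<mu>^2 - \<mu> - 1 = 0" using e1 mu0 unfolding 2
            by (simp add: field_simps power2_eq_square)
          have b: "(M - 1) * (\<mu>^2 + 1) = (M + 1) * \<mu>" using hs mu0 unfolding 2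
            by (simp add: field_simps power2_eq_square)
          have "M * \<mu> = M" using a b by (simp add: algebra_simps)
          then have "\<mu> = 1" using M0 by simp
          then show False using a \<open>M \<noteq> 3\<close> by (simp add: algebra_simps)
        qed
      next
        assume "m = 3"
        then have "M = 3" by (simp add: M_def)
        then have "s = 2" using hs by simp
        then have "(v - 1)^2 = 0" using v0 unfolding s_def by (simp add: field_simps power2_eq_square)
        then show False using v1 by simp
      next
        assume m4: "m \<ge> 4" and s3: "(\<Sum>u\<in>{1,v,1/v}. u^3) = of_nat m * \<mu>^3"
        have "M \<noteq> 3" proof
          assume "M = 3" then have "of_nat m = (of_nat 3 :: complex)" by (simp add: M_def)
          then have "m = 3" using of_nat_eq_iff by blast
          then show False using m4 by simp
        qed
        have "M \<noteq> -1"
        proof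
          assume "M = -1" then have "Re M = -1" by simp
          then show False by (simp add: M_def)
        qed
        have e3: "1 + s^3 - 3 * s = M * \<mu>^3"
        proof -
          have "(\<Sum>u\<in>{1,v,1/v}. u^3) = 1 + v^3 + (1/v)^3" using d1 d2 v1 by (simp add: add.assoc)
          also have "\<dots> = 1 + s^3 - 3 * s" using v0 by (simp add: s_def field_simps power3_eq_cube)
          finally show ?thesis using s3 by (simp add: M_def)
        qed
        have E: "M^2 * (1 + s^3 - 3 * s) = (1 + s)^3" using e1 e3
          by (simp add: power_mult_distrib power3_eq_cube power2_eq_square)
        have "M^2 * (M - 3) * (M^2 - 1) = 0" using E hs by algebra
        then show False using M0 \<open>M \<noteq> 3\<close> \<open>M \<noteq> -1\<close>
          by (auto simp: power2_eq_square square_eq_1_iff)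
      qed
    qed
  qed
qed



lemma sq1: "(w::complex) * w = 1 \<Longrightarrow> w = 1 \<or> w = -1"
proof -
  assume "w * w = 1"
  then have "(w - 1) * (w + 1) = 0" by (simp add: algebra_simps)
  then show ?thesis by (auto simp: eq_neg_iff_add_eq_0)
qed

lemma no4:
  assumes "{a,b,c,d} \<subseteq> {p,x,y}" "a\<noteq>b" "a\<noteq>c" "a\<noteq>d" "b\<noteq>c" "b\<noteq>d" "c\<noteq>d"
  shows False
proof -
  have c4: "card {a,b,c,d} = 4" using assms(2-) by simp
  have c3: "card {p,x,y} \<le> 3" by (simp add: card_insert_if)
  have "card {a,b,c,d} \<le> card {p,x,y}" using assms(1) by (rule card_mono[rotated]) simp
  then show False using c3 c4 by simp
qed

lemma small_inv:
  fixes U :: "complex set"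
  assumes "1 \<in> U" "\<forall>u\<in>U. 1/u \<in> U" "U \<subseteq> {1,x,y}" "0 \<notin> U"
  shows "\<exists>v. v \<noteq> 0 \<and> U = {1,v,1/v}"
proof (cases "\<exists>u\<in>U. u \<noteq> 1")
  case False
  then have "U = {1}" using assms(1) by auto
  then show ?thesis by (intro exI[of _ 1]) simp
next
  case True
  then obtain u where u: "u \<in> U" "u \<noteq> 1" by blast
  have u0: "u \<noteq> 0" using u assms(4) by auto
  have iu: "1/u \<in> U" using u assms(2) by auto
  have sub: "{1,u,1/u} \<subseteq> U" using u iu assms(1) by auto
  show ?thesis
  proof (cases "1/u = u")
    case False
    have "1/u \<noteq> 1" using u by (auto simp: field_simps)
    have "U \<subseteq> {1,u,1/u}"
    proof
      fix w assume w: "w \<in> U"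
      show "w \<in> {1,u,1/u}"
      proof (rule ccontr)
        assume nw: "w \<notin> {1,u,1/u}"
        have "{1,u,1/u,w} \<subseteq> {1,x,y}" using assms(3) w sub by (meson insert_subset subset_trans)
        then show False by (rule no4) (use nw u False \<open>1/u \<noteq> 1\<close> in auto)
      qed
    qed
    then show ?thesis using sub u0 by blast
  next
    case eq: True
    then have "u * u = 1" using u0 by (simp add: field_simps)
    then have um: "u = -1" using u sq1 by blast
    have "U \<subseteq> {1,u}"
    proof
      fix w assume w: "w \<in> U"
      show "w \<in> {1,u}"
      proof (rule ccontr)
        assume nw: "w \<notin> {1,u}"
        have w0: "w \<noteq> 0" using w assms(4) by auto
        have iw: "1/w \<in> U" using w assms(2) by auto
        have "1/w \<noteq> 1" using nw by (auto simp: field_simps)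
        moreover have "1/w \<noteq> u" using nw um w0 by (auto simp: field_simps minus_equation_iff[of w])
        moreover have "w \<noteq> 1/w"
        proof
          assume "w = 1/w" then have "w * w = 1" using w0 by (simp add: field_simps)
          then show False using nw um sq1 by blast
        qed
        moreover have "{1,u,w,1/w} \<subseteq> {1,x,y}" using assms(3) w iw sub by (meson insert_subset subset_trans)
        moreover have "u \<noteq> w" "1 \<noteq> w" using nw by auto
        ultimately show False using u(2) using no4[of 1 u w "1/w" 1 x y] by blast
      qed
    qed
    then have "U = {1,u,1/u}" using sub eq by auto
    then show ?thesis using u0 by blast
  qed
qed



lemma sum_pow_zero:
  assumes fcs: "finite_circle_subgroup G" and h: "h \<in> G" "h^j \<noteq> 1"
  shows "(\<Sum>g\<in>G. g^j) = 0"
proof -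
  have h0: "h \<noteq> 0" using fcs_facts(6)[OF fcs] h by auto
  have "bij_betw (\<lambda>g. h * g) G G"
  proof (rule bij_betwI[where g = "\<lambda>g. inverse h * g"])
    show "(\<lambda>g. h * g) \<in> G \<rightarrow> G" using fcs_facts(3)[OF fcs] h by auto
    show "(\<lambda>g. inverse h * g) \<in> G \<rightarrow> G" using fcs_facts(3,4)[OF fcs] h by auto
  qed (use h0 in \<open>auto simp: field_simps\<close>)
  then have "(\<Sum>g\<in>G. (h * g)^j) = (\<Sum>g\<in>G. g^j)" by (rule sum.reindex_bij_betw)
  then have "h^j * (\<Sum>g\<in>G. g^j) = 1 * (\<Sum>g\<in>G. g^j)"
    by (simp add: power_mult_distrib sum_distrib_left)
  then show ?thesis using h(2) by (metis mult_cancel_right)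
qed

lemma exists_h:
  assumes fcs: "finite_circle_subgroup G" and j: "j \<ge> 1" "card G > j"
  shows "\<exists>h\<in>G. h^j \<noteq> 1"
proof (rule ccontr)
  assume "\<not> ?thesis"
  then have "G \<subseteq> {z::complex. z^j = 1}" by auto
  then have "card G \<le> card {z::complex. z^j = 1}" using finite_roots_unity[OF j(1)] by (rule card_mono[rotated])
  also have "\<dots> \<le> j" using card_roots_unity[OF j(1)] .
  finally show False using j by simp
qed

lemma psums:
  assumes fcs: "finite_circle_subgroup G" and n3: "card G \<ge> 3"
  shows "(\<Sum>g\<in>G. (\<xi> * g + \<mu>)) = of_nat (card G) * \<mu>"
    "(\<Sum>g\<in>G. (\<xi> * g + \<mu>)^2) = of_nat (card G) * \<mu>^2"
    "card G \<ge> 4 \<Longrightarrow> (\<Sum>g\<in>G. (\<xi> * g + \<mu>)^3) = of_nat (card G) * \<mu>^3"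
proof -
  have z1: "(\<Sum>g\<in>G. g^1) = 0" proof -
    obtain h where "h \<in> G" "h^1 \<noteq> 1" using exists_h[OF fcs, of 1] n3 by auto
    then show ?thesis by (rule sum_pow_zero[OF fcs])
  qed
  have z2: "(\<Sum>g\<in>G. g^2) = 0" proof -
    obtain h where "h \<in> G" "h^2 \<noteq> 1" using exists_h[OF fcs, of 2] n3 by auto
    then show ?thesis by (rule sum_pow_zero[OF fcs])
  qed
  have z1': "(\<Sum>g\<in>G. g) = 0" using z1 by simp
  show "(\<Sum>g\<in>G. (\<xi> * g + \<mu>)) = of_nat (card G) * \<mu>"
    by (simp add: sum.distrib sum_distrib_left[symmetric] z1')
  have "(\<Sum>g\<in>G. (\<xi> * g + \<mu>)^2) = (\<Sum>g\<in>G. \<xi>^2 * g^2 + (2 * \<xi> * \<mu>) * g + \<mu>^2)"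
    by (rule sum.cong) (simp_all add: power2_eq_square algebra_simps)
  also have "\<dots> = of_nat (card G) * \<mu>^2"
    by (simp add: sum.distrib sum_distrib_left[symmetric] z1' z2)
  finally show "(\<Sum>g\<in>G. (\<xi> * g + \<mu>)^2) = of_nat (card G) * \<mu>^2" .
  assume n4: "card G \<ge> 4"
  have z3: "(\<Sum>g\<in>G. g^3) = 0" proof -
    obtain h where "h \<in> G" "h^3 \<noteq> 1" using exists_h[OF fcs, of 3] n4 by auto
    then show ?thesis by (rule sum_pow_zero[OF fcs])
  qed
  have "(\<Sum>g\<in>G. (\<xi> * g + \<mu>)^3) = (\<Sum>g\<in>G. \<xi>^3 * g^3 + (3 * \<xi>^2 * \<mu>) * g^2 + (3 * \<xi> * \<mu>^2) * g + \<mu>^3)"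
    by (rule sum.cong) (simp_all add: power2_eq_square power3_eq_cube algebra_simps)
  also have "\<dots> = of_nat (card G) * \<mu>^3"
    by (simp add: sum.distrib sum_distrib_left[symmetric] z1' z2 z3)
  finally show "(\<Sum>g\<in>G. (\<xi> * g + \<mu>)^3) = of_nat (card G) * \<mu>^3" .
qed

lemma sum_minus0:
  fixes S :: "complex set"
  assumes "finite S" "j \<ge> 1"
  shows "(\<Sum>u\<in>S - {0}. u^j) = (\<Sum>u\<in>S. u^j)"
  using assms by (intro sum.mono_neutral_left) auto

lemma sum_img:
  assumes fcs: "finite_circle_subgroup G" and xi: "\<xi> \<noteq> 0"
  shows "(\<Sum>u\<in>(\<lambda>g. \<xi> * g + \<mu>) ` G. f u) = (\<Sum>g\<in>G. f (\<xi> * g + \<mu>))"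
proof -
  have "inj_on (\<lambda>g. \<xi> * g + \<mu>) G" using xi by (auto simp: inj_on_def)
  then show ?thesis by (simp add: sum.reindex)
qed



lemma quot_in: "a \<in> A \<Longrightarrow> b \<in> A \<Longrightarrow> a / b \<in> set_quot A"
  by (auto simp: set_quot_def)

lemma cmod_shift: "(a::complex) \<noteq> 0 \<Longrightarrow> cmod (x - a * m) = cmod a * cmod (x / a - m)"
proof -
  assume a: "a \<noteq> 0"
  have "x - a * m = a * (x / a - m)" using a by (simp add: field_simps)
  then show ?thesis by (simp add: norm_mult)
qed

lemma alg_N:
  fixes v :: complex
  assumes "cmod (v + 1) = 2" "cmod (v - 1) = 2" "cmod (1 / v + 1) = 2"
  shows False
proof -
  have a: "(Re v + 1)^2 + (Im v)^2 = 4" using assms(1) cmod_power2[of "v+1"] by simp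
  have b: "(Re v - 1)^2 + (Im v)^2 = 4" using assms(2) cmod_power2[of "v-1"] by simp
  have re: "Re v = 0" using a b by (simp add: power2_eq_square algebra_simps)
  then have im: "(Im v)^2 = 3" using a by simp
  then have v0: "v \<noteq> 0" by auto
  have c: "(Re (1/v) + 1)^2 + (Im (1/v))^2 = 4" using assms(3) cmod_power2[of "1/v+1"] by simp
  have "Re (1/v) = 0" using re by (simp add: Re_divide)
  moreover have "(Im (1/v))^2 = 1/3"
  proof -
    have "Im (1/v) = - Im v / 3" using re im by (simp add: Im_divide)
    then have "(Im (1/v))^2 = (Im v)^2 / 9" by (simp add: power2_eq_square)
    then show ?thesis using im by simp
  qed
  ultimately show False using c by simp
qed

lemma alg_Q:
  fixes m :: complex
  assumes "cmod m = 1" "m \<noteq> 1" "cmod (1/m - m) = cmod (1 - m)"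
  shows "m^2 + m + 1 = 0"
proof -
  have n: "(Re m)^2 + (Im m)^2 = 1" using assms(1) cmod_power2[of m] by simp
  have inv: "1/m = cnj m" using complex_div_cnj[of 1 m] assms(1) by simp
  have "(cmod (1/m - m))^2 = (cmod (1 - m))^2" using assms(3) by simp
  then have e: "(2 * Im m)^2 = (1 - Re m)^2 + (Im m)^2"
    unfolding inv cmod_power2 by (simp add: power2_eq_square)
  have "(1 - Re m) * (2 + 4 * Re m) = 0" using e n by (simp add: power2_eq_square algebra_simps)
  moreover have "Re m \<noteq> 1"
  proof
    assume "Re m = 1" then have "Im m = 0" using n by simp
    then show False using \<open>Re m = 1\<close> assms(2) by (simp add: complex_eq_iff)
  qed
  ultimately have r: "Re m = -1/2" by simp
  then have i: "(Im m)^2 = 3/4" using n by (simp add: power2_eq_square)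
  show ?thesis using r i by (simp add: complex_eq_iff power2_eq_square algebra_simps)
qed

lemma two_or_less:
  assumes "\<not> (\<exists>p q w. p \<in> S \<and> q \<in> S \<and> w \<in> S \<and> p \<noteq> q \<and> p \<noteq> w \<and> q \<noteq> w)"
  shows "\<exists>x y. S \<subseteq> {x, y}"
proof (cases "S = {}")
  case True then show ?thesis by blast
next
  case False
  then obtain x where x: "x \<in> S" by blast
  show ?thesis
  proof (cases "S \<subseteq> {x}")
    case True then show ?thesis by blast
  next
    case False
    then obtain y where y: "y \<in> S" "y \<noteq> x" by blast
    have "S \<subseteq> {x, y}" using assms x y by blast
    then show ?thesis by blast
  qed
qed



lemma big3:
  fixes A :: "complex set" and \<mu> :: complex and r :: real
  assumes A0: "A \<subseteq> - {0}" and onC: "\<And>u. u \<in> set_quot A \<Longrightarrow> u = \<mu> \<or> cmod (u - \<mu>) = r"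
    and mu0: "\<mu> \<noteq> 0" and abc: "a \<in> A" "b \<in> A" "c \<in> A" "a \<noteq> b" "a \<noteq> c" "b \<noteq> c"
    and fin: "\<And>x y. set_quot A \<subseteq> {1, x, y} \<Longrightarrow> False"
  shows False
proof -
  have nz: "\<And>x. x \<in> A \<Longrightarrow> x \<noteq> 0" using A0 by auto
  have h: "cmod (t - s * \<mu>) = cmod s * r" if "s \<in> A" "t \<in> A" "t \<noteq> s * \<mu>" for s t
  proof -
    have "t / s \<in> set_quot A" using quot_in[OF that(2,1)] .
    moreover have "t / s \<noteq> \<mu>" using that nz[OF that(1)] by (auto simp: field_simps)
    ultimately have "cmod (t / s - \<mu>) = r" using onC by blast
    then show ?thesis using cmod_shift[OF nz[OF that(1)]] by simp
  qed
  have Pl: False if "p \<in> A" "q \<in> A" "p \<noteq> q" "x \<in> A" "y \<in> A" "z \<in> A" "x \<noteq> y" "x \<noteq> z" "y \<noteq> z"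
    "x \<notin> {p * \<mu>, q * \<mu>}" "y \<notin> {p * \<mu>, q * \<mu>}" "z \<notin> {p * \<mu>, q * \<mu>}" for p q x y z
  proof -
    have "p * \<mu> \<noteq> q * \<mu>" using that mu0 by simp
    then have "x = y \<or> x = z \<or> y = z"
      by (rule circle3[of "p * \<mu>" "q * \<mu>" x "cmod p * r" y z "cmod q * r"]) (use h that in auto)
    then show False using that by auto
  qed
  show False
  proof (cases "\<mu> = 1")
    case True
    have eqmod: "cmod x = cmod y" if "x \<in> A" "y \<in> A" for x y
    proof (cases "x = y")
      case False
      have e1: "cmod (x - y) = cmod y * r" using h[of y x] that False True by simp
      have e2: "cmod (y - x) = cmod x * r" using h[of x y] that False True by simp
      have "cmod (x - y) \<noteq> 0" using False by simp
      then have "r \<noteq> 0" using e1 by auto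
      then show ?thesis using e1 e2 by (simp add: norm_minus_commute)
    qed simp
    have unit: "cmod u = 1" if uu: "u \<in> set_quot A" for u
    proof -
      obtain p q where "p \<in> A" "q \<in> A" "u = p / q" using uu by (auto simp: set_quot_def)
      then show ?thesis using eqmod[of p q] nz[of q] by (simp add: norm_divide)
    qed
    show False
    proof (cases "\<exists>p q w. p \<in> set_quot A - {1} \<and> q \<in> set_quot A - {1} \<and> w \<in> set_quot A - {1} \<and> p \<noteq> q \<and> p \<noteq> w \<and> q \<noteq> w")
      case True
      then obtain p q w where pqw: "p \<in> set_quot A - {1}" "q \<in> set_quot A - {1}" "w \<in> set_quot A - {1}" "p \<noteq> q" "p \<noteq> w" "q \<noteq> w" by blast
      have "cmod (t - 1) = r" if "t \<in> set_quot A - {1}" for t using onC[of t] that \<open>\<mu> = 1\<close> by auto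
      moreover have "cmod (t - 0) = 1" if "t \<in> set_quot A - {1}" for t using unit that by simp
      ultimately have "p = q \<or> p = w \<or> q = w"
        using pqw by (intro circle3[of 0 1 p 1 q w r]) auto
      then show False using pqw by auto
    next
      case False
      then obtain x y where "set_quot A - {1} \<subseteq> {x, y}" using two_or_less by blast
      then have "set_quot A \<subseteq> {1, x, y}" by auto
      then show False by (rule fin)
    qed
  next
    case mu1: False
    define out where "out t \<longleftrightarrow> t * \<mu> \<in> {a, b, c}" for t
    have Pout: "out p \<or> out q" if "p \<in> {a,b,c}" "q \<in> {a,b,c}" "p \<noteq> q" for p q
    proof (rule ccontr)
      assume "\<not> (out p \<or> out q)"
      then have "a \<notin> {p * \<mu>, q * \<mu>}" "b \<notin> {p * \<mu>, q * \<mu>}" "c \<notin> {p * \<mu>, q * \<mu>}"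
        unfolding out_def by auto
      then show False using Pl[of p q a b c] that abc by auto
    qed
    have T12: "(\<mu> = -1 \<and> (\<exists>p\<in>A. \<exists>w\<in>A. -p \<in> A \<and> w \<noteq> p \<and> w \<noteq> -p))
      \<or> (\<exists>x\<in>A. x * \<mu> \<in> A \<and> x * \<mu>^2 \<in> A \<and> x \<noteq> x * \<mu> \<and> x \<noteq> x * \<mu>^2 \<and> x * \<mu> \<noteq> x * \<mu>^2)"
      if pqw: "{p,q,w} = {a,b,c}" "p \<noteq> q" "p \<noteq> w" "q \<noteq> w" and op: "out p" and oq: "out q" for p q w
    proof -
      have "{p,q,w} \<subseteq> A" unfolding pqw(1) using abc(1-3) by simp
      then have inA: "p \<in> A" "q \<in> A" "w \<in> A" by simp_all
      have p0: "p \<noteq> 0" "q \<noteq> 0" using nz inA by auto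
      have "p * \<mu> \<in> {p, q, w}" using op unfolding out_def pqw(1) .
      moreover have "p * \<mu> \<noteq> p" using p0 mu1 by simp
      ultimately have pm: "p * \<mu> \<in> {q, w}" by blast
      have "q * \<mu> \<in> {p, q, w}" using oq unfolding out_def pqw(1) .
      moreover have "q * \<mu> \<noteq> q" using p0 mu1 by simp
      ultimately have qm: "q * \<mu> \<in> {p, w}" by blast
      have ne: "p * \<mu> \<noteq> q * \<mu>" using pqw mu0 by simp
      show ?thesis
      proof (cases "p * \<mu> = q")
        case pq: True
        show ?thesis
        proof (cases "q * \<mu> = p")
          case True
          then have "p * (\<mu> * \<mu>) = p * 1" using pq by (simp add: mult.assoc[symmetric])
          then have "\<mu> * \<mu> = 1" using p0 by simp
          then have "\<mu> = -1" using mu1 by (auto simp: square_eq_1_iff)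
          then have "q = -p" using pq by simp
          then show ?thesis using inA pqw \<open>\<mu> = -1\<close> by auto
        next
          case False
          then have "q * \<mu> = w" using qm by auto
          then have "p * \<mu>^2 = w" using pq by (simp add: power2_eq_square mult.assoc[symmetric])
          then show ?thesis using inA pqw pq by (intro disjI2 bexI[of _ p]) auto
        qed
      next
        case False
        then have pw: "p * \<mu> = w" using pm by auto
        then have "q * \<mu> = p" using qm ne by auto
        then have "q * \<mu>^2 = w" using pw by (simp add: power2_eq_square mult.assoc[symmetric])
        then show ?thesis using inA pqw pw \<open>q * \<mu> = p\<close> by (intro disjI2 bexI[of _ q]) auto
      qed
    qed
    have "out a \<and> out b \<or> out a \<and> out c \<or> out b \<and> out c"
      using Pout[of a b] Pout[of a c] Pout[of b c] abc by auto
    then have R: "(\<mu> = -1 \<and> (\<exists>p\<in>A. \<exists>w\<in>A. -p \<in> A \<and> w \<noteq> p \<and> w \<noteq> -p))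
      \<or> (\<exists>x\<in>A. x * \<mu> \<in> A \<and> x * \<mu>^2 \<in> A \<and> x \<noteq> x * \<mu> \<and> x \<noteq> x * \<mu>^2 \<and> x * \<mu> \<noteq> x * \<mu>^2)"
    proof (elim disjE conjE)
      assume "out a" "out b" then show ?thesis using T12[of a b c] abc by auto
    next
      assume "out a" "out c" then show ?thesis using T12[of a c b] abc by auto
    next
      assume "out b" "out c" then show ?thesis using T12[of b c a] abc by auto
    qed
    have one: "1 \<in> set_quot A" using quot_in[OF abc(1) abc(1)] nz[OF abc(1)] by simp
    have r1: "cmod (1 - \<mu>) = r" using onC[OF one] mu1 by auto
    from R show False
    proof (elim disjE conjE bexE)
      fix p w assume mm: "\<mu> = -1" and p: "p \<in> A" and w: "w \<in> A" and mp: "-p \<in> A" and wp: "w \<noteq> p" "w \<noteq> -p"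
      have p0: "p \<noteq> 0" using nz p by auto
      have w0: "w \<noteq> 0" using nz w by auto
      have r2: "r = 2" using r1 mm by simp
      define v where "v = w / p"
      have v0: "v \<noteq> 0" using p0 w0 by (simp add: v_def)
      have "v \<in> set_quot A" using quot_in[OF w p] by (simp add: v_def)
      moreover have "v \<noteq> -1" using wp p0 by (auto simp: v_def field_simps)
      ultimately have c1: "cmod (v + 1) = 2" using onC[of v] mm r2 by auto
      have "w / (-p) \<in> set_quot A" using quot_in[OF w mp] .
      then have "-v \<in> set_quot A" by (simp add: v_def)
      moreover have "-v \<noteq> -1" using wp p0 by (auto simp: v_def field_simps)
      ultimately have "cmod (-v + 1) = 2" using onC[of "-v"] mm r2 by auto
      then have c2: "cmod (v - 1) = 2" by (simp add: norm_minus_commute)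
      have "p / w \<in> set_quot A" using quot_in[OF p w] .
      then have "1 / v \<in> set_quot A" by (simp add: v_def)
      moreover have "1 / v \<noteq> -1" using wp p0 w0 by (auto simp: v_def field_simps)
      ultimately have c3: "cmod (1 / v + 1) = 2" using onC[of "1/v"] mm r2 by auto
      show False using alg_N[OF c1 c2 c3] .
    next
      fix x assume x: "x \<in> A" and x1: "x * \<mu> \<in> A" and x2: "x * \<mu>^2 \<in> A"
        and d1: "x \<noteq> x * \<mu>" and d2: "x \<noteq> x * \<mu>^2" and d3: "x * \<mu> \<noteq> x * \<mu>^2"
      have x0: "x \<noteq> 0" using nz x by auto
      have "\<mu>^2 \<in> set_quot A" using quot_in[OF x2 x] x0 by simp
      moreover have "\<mu>^2 \<noteq> \<mu>" using mu0 mu1 by (simp add: power2_eq_square)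
      ultimately have "cmod (\<mu>^2 - \<mu>) = r" using onC by blast
      moreover have "\<mu>^2 - \<mu> = \<mu> * (\<mu> - 1)" by (simp add: power2_eq_square algebra_simps)
      ultimately have "cmod \<mu> * cmod (\<mu> - 1) = cmod (1 - \<mu>)" using r1 by (simp add: norm_mult)
      moreover have "cmod (\<mu> - 1) \<noteq> 0" using mu1 by simp
      ultimately have mn: "cmod \<mu> = 1" by (simp add: norm_minus_commute)
      have "1 / \<mu> \<in> set_quot A" using quot_in[OF x x1] x0 by simp
      moreover have "1 / \<mu> \<noteq> \<mu>"
      proof
        assume "1 / \<mu> = \<mu>" then have "\<mu>^2 = 1" using mu0 by (simp add: field_simps power2_eq_square)
        then show False using d2 by simp
      qed
      ultimately have "cmod (1 / \<mu> - \<mu>) = r" using onC by blast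
      then have q: "\<mu>^2 + \<mu> + 1 = 0" using alg_Q[OF mn mu1] r1 by simp
      have m3: "\<mu>^3 = 1"
      proof -
        have "\<mu>^3 - 1 = (\<mu> - 1) * (\<mu>^2 + \<mu> + 1)" by (simp add: power2_eq_square power3_eq_cube algebra_simps)
        then show ?thesis using q by simp
      qed
      have i1: "1 / \<mu> = \<mu>^2" using m3 mu0 by (simp add: field_simps power2_eq_square power3_eq_cube)
      have Asub: "A \<subseteq> {x, x * \<mu>, x * \<mu>^2}"
      proof
        fix d assume d: "d \<in> A"
        show "d \<in> {x, x * \<mu>, x * \<mu>^2}"
        proof (rule ccontr)
          assume nd: "d \<notin> {x, x * \<mu>, x * \<mu>^2}"
          have "x \<noteq> d * \<mu>"
          proof
            assume "x = d * \<mu>" then have "d = x * (1 / \<mu>)" using mu0 by (simp add: field_simps)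
            then show False using nd i1 by simp
          qed
          moreover have "x * \<mu>^2 \<noteq> d * \<mu>"
          proof
            assume "x * \<mu>^2 = d * \<mu>" then have "d = x * \<mu>" using mu0 by (simp add: power2_eq_square)
            then show False using nd by simp
          qed
          moreover have "d \<noteq> d * \<mu>" using nz[OF d] mu1 by simp
          ultimately show False using Pl[of x d x "x * \<mu>^2" d] x d x2 nd d1 d2 d3 by auto
        qed
      qed
      have i2: "1 / \<mu>^2 = \<mu>" using m3 mu0 by (simp add: field_simps power2_eq_square power3_eq_cube)
      have "set_quot A \<subseteq> {1, \<mu>, \<mu>^2}"
      proof
        fix u assume "u \<in> set_quot A"
        then obtain p q where pq: "p \<in> A" "q \<in> A" "u = p / q" by (auto simp: set_quot_def)
        have e: "x / x = 1" "(x * \<mu>) / x = \<mu>" "(x * \<mu>^2) / x = \<mu>^2"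
          "x / (x * \<mu>) = \<mu>^2" "(x * \<mu>) / (x * \<mu>) = 1" "(x * \<mu>^2) / (x * \<mu>) = \<mu>"
          "x / (x * \<mu>^2) = \<mu>" "(x * \<mu>) / (x * \<mu>^2) = \<mu>^2" "(x * \<mu>^2) / (x * \<mu>^2) = 1"
          using x0 mu0 i1 i2 by (simp_all add: power2_eq_square field_simps)
        have hp: "p = x \<or> p = x * \<mu> \<or> p = x * \<mu>^2" using Asub pq(1) by blast
        have hq: "q = x \<or> q = x * \<mu> \<or> q = x * \<mu>^2" using Asub pq(2) by blast
        from hp hq show "u \<in> {1, \<mu>, \<mu>^2}" unfolding pq(3)
          by (elim disjE; hypsubst; simp only: e insert_iff simp_thms)
      qed
      then show False by (rule fin)
    qed
  qed
qed



lemma sums_U2: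
  assumes fcs: "finite_circle_subgroup G" and xi: "\<xi> \<noteq> 0" and j: "j \<ge> 1"
  shows "(\<Sum>u\<in>(\<lambda>g. \<xi> * g + \<mu>) ` G - {0}. u^j) = (\<Sum>g\<in>G. (\<xi> * g + \<mu>)^j)"
proof -
  have "finite ((\<lambda>g. \<xi> * g + \<mu>) ` G)" using fcs_facts(1)[OF fcs] by simp
  then have "(\<Sum>u\<in>(\<lambda>g. \<xi> * g + \<mu>) ` G - {0}. u^j) = (\<Sum>u\<in>(\<lambda>g. \<xi> * g + \<mu>) ` G. u^j)"
    using j by (rule sum_minus0)
  also have "\<dots> = (\<Sum>g\<in>G. (\<xi> * g + \<mu>)^j)" using sum_img[OF fcs xi] .
  finally show ?thesis .
qed

lemma two_elems:
  assumes fcs: "finite_circle_subgroup G" and n3: "card G \<ge> 3"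
  obtains g where "g \<in> G" "g \<noteq> 1"
proof -
  have "\<not> G \<subseteq> {1}"
  proof
    assume "G \<subseteq> {1}"
    then have "card G \<le> card {1::complex}" by (rule card_mono[rotated]) simp
    then show False using n3 by simp
  qed
  then show ?thesis using that by blast
qed

lemma quot_small:
  assumes A0: "A \<subseteq> - {0}" and "A \<subseteq> {x, y}"
  shows "set_quot A \<subseteq> {1, x / y, y / x}"
proof
  fix u assume "u \<in> set_quot A"
  then obtain p q where pq: "p \<in> A" "q \<in> A" "u = p / q" by (auto simp: set_quot_def)
  have "p \<noteq> 0" "q \<noteq> 0" using pq A0 by auto
  then show "u \<in> {1, x / y, y / x}" using pq assms(2) by auto
qed

lemma quot_inv: "u \<in> set_quot A \<Longrightarrow> 1 / u \<in> set_quot A"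
proof -
  assume "u \<in> set_quot A"
  then obtain p q where pq: "p \<in> A" "q \<in> A" "u = p / q" by (auto simp: set_quot_def)
  then have "1 / u = q / p" by simp
  then show ?thesis using quot_in[OF pq(2,1)] by simp
qed

lemma part2:
  assumes fcs: "finite_circle_subgroup G" and n3: "card G \<ge> 3" and xi: "\<xi> \<noteq> 0" and mu: "\<mu> \<noteq> 0"
    and A0: "A \<subseteq> - {0}" and eq: "set_quot A = (\<lambda>g. \<xi> * g + \<mu>) ` G - {0}"
  shows False
proof -
  have onC: "cmod (u - \<mu>) = cmod \<xi>" if uu: "u \<in> set_quot A" for u
  proof -
    obtain g where g: "g \<in> G" "u = \<xi> * g + \<mu>" using uu unfolding eq by auto
    then show ?thesis using fcs_facts(2)[OF fcs g(1)] by (simp add: norm_mult)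
  qed
  have U0: "0 \<notin> set_quot A" using eq by auto
  have finish: False if sub: "set_quot A \<subseteq> {1, x, y}" and one: "1 \<in> set_quot A" for x y
  proof -
    obtain v where v: "v \<noteq> 0" "set_quot A = {1, v, 1/v}"
      using small_inv[OF one _ sub U0] quot_inv by blast
    have S: "(\<Sum>u\<in>{1, v, 1/v}. u^j) = (\<Sum>g\<in>G. (\<xi> * g + \<mu>)^j)" if "j \<ge> 1" for j
      using sums_U2[OF fcs xi that, where \<mu> = \<mu>] unfolding eq[symmetric] v(2) .
    have s1: "(\<Sum>u\<in>{1, v, 1/v}. u) = of_nat (card G) * \<mu>"
      using S[of 1] psums(1)[OF fcs n3] by simp
    have s2: "(\<Sum>u\<in>{1, v, 1/v}. u^2) = of_nat (card G) * \<mu>^2"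
      using S[of 2] psums(2)[OF fcs n3] by simp
    have alt: "card G = 3 \<or> (card G \<ge> 4 \<and> (\<Sum>u\<in>{1, v, 1/v}. u^3) = of_nat (card G) * \<mu>^3)"
      using S[of 3] psums(3)[OF fcs n3] n3 by auto
    show False using fin_main[OF v(1) s1 s2 mu n3] alt by blast
  qed
  obtain g2 where g2: "g2 \<in> G" "g2 \<noteq> 1" using two_elems[OF fcs n3] by blast
  have "\<xi> * 1 + \<mu> \<noteq> \<xi> * g2 + \<mu>" using g2 xi by simp
  then have "\<xi> * 1 + \<mu> \<noteq> 0 \<or> \<xi> * g2 + \<mu> \<noteq> 0" by metis
  then have "\<xi> * 1 + \<mu> \<in> set_quot A \<or> \<xi> * g2 + \<mu> \<in> set_quot A"
    unfolding eq using g2 fcs_facts(5)[OF fcs] by blast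
  then obtain a where a: "a \<in> A" by (auto simp: set_quot_def)
  have "a \<noteq> 0" using a A0 by auto
  then have one: "1 \<in> set_quot A" using quot_in[OF a a] by simp
  show False
  proof (cases "\<exists>p q w. p \<in> A \<and> q \<in> A \<and> w \<in> A \<and> p \<noteq> q \<and> p \<noteq> w \<and> q \<noteq> w")
    case True
    then obtain p q w where pqw: "p \<in> A" "q \<in> A" "w \<in> A" "p \<noteq> q" "p \<noteq> w" "q \<noteq> w" by blast
    have h: "cmod (t - s * \<mu>) = cmod s * cmod \<xi>" if "s \<in> A" "t \<in> A" for s t
    proof -
      have "s \<noteq> 0" using that A0 by auto
      then show ?thesis using onC[OF quot_in[OF that(2,1)]] cmod_shift by simp
    qed
    have "p * \<mu> \<noteq> q * \<mu>" using pqw mu by simp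
    then have "p = q \<or> p = w \<or> q = w"
      by (rule circle3[of "p * \<mu>" "q * \<mu>" p "cmod p * cmod \<xi>" q w "cmod q * cmod \<xi>"])
         (use h pqw in auto)
    then show False using pqw by auto
  next
    case False
    then obtain x y where "A \<subseteq> {x, y}" using two_or_less by blast
    then show False using finish[OF quot_small[OF A0] one] by blast
  qed
qed

lemma part3:
  assumes fcs: "finite_circle_subgroup G" and n3: "card G \<ge> 3" and xi: "\<xi> \<noteq> 0" and mu: "\<mu> \<noteq> 0"
    and A0: "A \<subseteq> - {0}" and eq0: "set_quot A = (\<lambda>z. z + \<mu>) ` ((\<lambda>g. \<xi> * g) ` G \<union> {0}) - {0}"
  shows False
proof -
  have G0: "0 \<notin> G" using fcs_facts(6)[OF fcs] .
  have "(\<lambda>z. z + \<mu>) ` ((\<lambda>g. \<xi> * g) ` G \<union> {0}) = insert \<mu> ((\<lambda>g. \<xi> * g + \<mu>) ` G)"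
    by (auto simp: image_Un image_image)
  then have eq: "set_quot A = insert \<mu> ((\<lambda>g. \<xi> * g + \<mu>) ` G) - {0}" using eq0 by simp
  have notin: "\<mu> \<notin> (\<lambda>g. \<xi> * g + \<mu>) ` G" using xi G0 by auto
  have onC: "u = \<mu> \<or> cmod (u - \<mu>) = cmod \<xi>" if uu: "u \<in> set_quot A" for u
  proof (cases "u = \<mu>")
    case False
    then obtain g where g: "g \<in> G" "u = \<xi> * g + \<mu>" using uu unfolding eq by auto
    then show ?thesis using fcs_facts(2)[OF fcs g(1)] by (simp add: norm_mult)
  qed simp
  have U0: "0 \<notin> set_quot A" using eq by auto
  have muU: "\<mu> \<in> set_quot A" using eq mu by auto
  have finish: False if sub: "set_quot A \<subseteq> {1, x, y}" for x y
  proof -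
    obtain a where a: "a \<in> A" using muU by (auto simp: set_quot_def)
    have "a \<noteq> 0" using a A0 by auto
    then have one: "1 \<in> set_quot A" using quot_in[OF a a] by simp
    obtain v where v: "v \<noteq> 0" "set_quot A = {1, v, 1/v}"
      using small_inv[OF one _ sub U0] quot_inv by blast
    have fin: "finite ((\<lambda>g. \<xi> * g + \<mu>) ` G)" using fcs_facts(1)[OF fcs] by simp
    have S: "(\<Sum>u\<in>{1, v, 1/v}. u^j) = (\<Sum>g\<in>G. (\<xi> * g + \<mu>)^j) + \<mu>^j" if "j \<ge> 1" for j
    proof -
      have "(\<Sum>u\<in>{1, v, 1/v}. u^j) = (\<Sum>u\<in>insert \<mu> ((\<lambda>g. \<xi> * g + \<mu>) ` G). u^j)"
        unfolding v(2)[symmetric] eq using fin that by (intro sum_minus0) auto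
      also have "\<dots> = \<mu>^j + (\<Sum>u\<in>(\<lambda>g. \<xi> * g + \<mu>) ` G. u^j)" using fin notin by simp
      also have "\<dots> = \<mu>^j + (\<Sum>g\<in>G. (\<xi> * g + \<mu>)^j)" using sum_img[OF fcs xi] by simp
      finally show ?thesis by simp
    qed
    have s1: "(\<Sum>u\<in>{1, v, 1/v}. u) = of_nat (card G + 1) * \<mu>"
    proof -
      have "(\<Sum>u\<in>{1, v, 1/v}. u) = (\<Sum>g\<in>G. (\<xi> * g + \<mu>)) + \<mu>"
        using S[of 1] by (simp only: power_one_right order_refl)
      also have "\<dots> = of_nat (card G) * \<mu> + \<mu>" using psums(1)[OF fcs n3, of \<xi> \<mu>] by simp
      finally show ?thesis by (simp add: distrib_right)
    qed
    have s2: "(\<Sum>u\<in>{1, v, 1/v}. u^2) = of_nat (card G + 1) * \<mu>^2"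
    proof -
      have "(\<Sum>u\<in>{1, v, 1/v}. u^2) = (\<Sum>g\<in>G. (\<xi> * g + \<mu>)^2) + \<mu>^2"
        using S[of 2] by simp
      also have "\<dots> = of_nat (card G) * \<mu>^2 + \<mu>^2" using psums(2)[OF fcs n3, of \<xi> \<mu>] by simp
      finally show ?thesis by (simp add: distrib_right)
    qed
    have m3: "card G + 1 \<ge> 3" using n3 by simp
    have alt: "\<mu> \<in> {1, v, 1/v} \<and> card G + 1 \<ge> 4" using muU v(2) n3 by simp
    show False using fin_main[OF v(1) s1 s2 mu m3] alt by blast
  qed
  show False
  proof (cases "\<exists>p q w. p \<in> A \<and> q \<in> A \<and> w \<in> A \<and> p \<noteq> q \<and> p \<noteq> w \<and> q \<noteq> w")
    case True
    then obtain p q w where pqw: "p \<in> A" "q \<in> A" "w \<in> A" "p \<noteq> q" "p \<noteq> w" "q \<noteq> w" by blast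
    show False by (rule big3[OF A0 onC mu pqw finish]) auto
  next
    case False
    then obtain x y where "A \<subseteq> {x, y}" using two_or_less by blast
    then show False using finish[OF quot_small[OF A0]] by blast
  qed
qed


theorem theorem1p12:
  fixes G :: "complex set"
  assumes "finite_circle_subgroup G"
  shows "(\<forall>l\<in>G. \<not> (\<exists>A B. A \<subseteq> - {0} \<and> B \<subseteq> - {0} \<and> at_least_two A \<and> at_least_two B
              \<and> set_prod A B = (\<lambda>g. g - l) ` G - {0}))
     \<and> (card G \<ge> 3 \<longrightarrow> (\<forall>\<xi> \<mu> A. \<xi> \<noteq> 0 \<longrightarrow> \<mu> \<noteq> 0 \<longrightarrow> A \<subseteq> - {0} \<longrightarrow>
              set_quot A \<noteq> (\<lambda>g. \<xi> * g + \<mu>) ` G - {0}))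
     \<and> (card G \<ge> 3 \<longrightarrow> (\<forall>\<xi> \<mu> A. \<xi> \<noteq> 0 \<longrightarrow> \<mu> \<noteq> 0 \<longrightarrow> A \<subseteq> - {0} \<longrightarrow>
              set_quot A \<noteq> (\<lambda>z. z + \<mu>) ` ((\<lambda>g. \<xi> * g) ` G \<union> {0}) - {0}))"
proof (intro conjI ballI impI allI notI)
  fix l assume l: "l \<in> G"
  assume "\<exists>A B. A \<subseteq> - {0} \<and> B \<subseteq> - {0} \<and> at_least_two A \<and> at_least_two B
              \<and> set_prod A B = (\<lambda>g. g - l) ` G - {0}"
  then obtain A B where "A \<subseteq> - {0}" "B \<subseteq> - {0}" "at_least_two A" "at_least_two B"
    "set_prod A B = (\<lambda>g. g - l) ` G - {0}" by blast
  then show False by (rule part1[OF assms l])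
next
  fix \<xi> \<mu> :: complex and A :: "complex set"
  assume "card G \<ge> 3" "\<xi> \<noteq> 0" "\<mu> \<noteq> 0" "A \<subseteq> - {0}" "set_quot A = (\<lambda>g. \<xi> * g + \<mu>) ` G - {0}"
  then show False by (rule part2[OF assms])
next
  fix \<xi> \<mu> :: complex and A :: "complex set"
  assume "card G \<ge> 3" "\<xi> \<noteq> 0" "\<mu> \<noteq> 0" "A \<subseteq> - {0}"
    "set_quot A = (\<lambda>z. z + \<mu>) ` ((\<lambda>g. \<xi> * g) ` G \<union> {0}) - {0}"
  then show False by (rule part3[OF assms])
qed

end
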